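(* The formal power series \[ \Phi(x,x)=\sum_{m\ge1}\sum_{n\ge1}\gcd(m,n)\,x^{m+n}\qquad\text{and}\qquad \sum_{n\ge1}\Big(\sum_{d\mid n}\frac{\phi(d)}{d}\Big)n\,x^n \] in $\mathbb{C}((x))$ are transcendental over $\mathbb{C}(x)$.
   Context: $\phi$ is Euler's totient function; $\mathbb{C}((x))$ is the field of formal Laurent series in $x$ with complex coefficients, containing the field $\mathbb{C}(x)$ of rational functions. *)

theory Defs
  imports "HOL-Computational_Algebra.Computational_Algebra" "HOL-Number_Theory.Totient"
begin

definition rat_funs_fls :: "complex fls set" where
  "rat_funs_fls = {fps_to_fls (fps_of_poly p) / fps_to_fls (fps_of_poly q) | p q. q \<noteq> 0}"

definition algebraic_over_rat_funs :: "complex fls \<Rightarrow> bool" where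
  "algebraic_over_rat_funs f \<longleftrightarrow>
     (\<exists>P :: complex fls poly. P \<noteq> 0 \<and> (\<forall>i. coeff P i \<in> rat_funs_fls) \<and> poly P f = 0)"

definition transcendental_over_rat_funs :: "complex fls \<Rightarrow> bool" where
  "transcendental_over_rat_funs f \<longleftrightarrow> \<not> algebraic_over_rat_funs f"

text \<open>Phi(x,x) = sum_{m,n>=1} gcd(m,n) x^(m+n): coefficient of x^N is
  sum over m = 1..N-1 of gcd(m, N-m).\<close>
definition Phi_diag :: "complex fls" where
  "Phi_diag = fps_to_fls (Abs_fps (\<lambda>N. \<Sum>m=1..<N. of_nat (gcd m (N - m))))"

definition totient_series :: "complex fls" where
  "totient_series = fps_to_fls (Abs_fps (\<lambda>n. if n = 0 then 0 else
      (\<Sum>d\<in>{d. d dvd n}. of_nat (totient d) / of_nat d) * of_nat n))"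

end

theory Submission
  imports Defs "HOL-Analysis.FPS_Convergence" "HOL-Analysis.Harmonic_Numbers" "HOL-Real_Asymp.Real_Asymp"
begin

lemma poly_factor_at_0:
  fixes p :: "complex poly"
  assumes "p \<noteq> 0"
  shows "\<exists>e u. p = [:0,1:]^e * u \<and> poly u 0 \<noteq> 0"
proof -
  from order_decomp[OF assms, of 0] obtain u where "p = [:- 0, 1:] ^ order 0 p * u" "\<not> [:- 0, 1:] dvd u"
    by blast
  then show ?thesis using poly_eq_0_iff_dvd[of u 0] by auto
qed

lemma dominant:
  fixes q :: "nat \<Rightarrow> complex poly" and H :: "real \<Rightarrow> complex" and D :: nat
  assumes nz: "\<exists>i\<le>D. q i \<noteq> 0"
  and lim1: "filterlim (\<lambda>s. s^2 * norm (H s)) at_top (at_right 0)"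
  and lim2: "\<And>m. ((\<lambda>s. s * (s^2 * norm (H s)) ^ m) \<longlongrightarrow> 0) (at_right 0)"
  and eq: "\<forall>\<^sub>F s in at_right 0. (\<Sum>i\<le>D. poly (q i) (of_real s) * H s ^ i) = 0"
  shows False
proof -
  define Gn where "Gn = (\<lambda>s. s^2 * norm (H s))"
  define K where "K = (\<lambda>s. complex_of_real (s^2) * H s)"
  define I where "I = {i. i \<le> D \<and> q i \<noteq> 0}"
  have finI: "finite I" unfolding I_def by auto
  have Ine: "I \<noteq> {}" using nz unfolding I_def by auto
  have "\<forall>i. \<exists>e u. q i \<noteq> 0 \<longrightarrow> (q i = [:0,1:]^e * u \<and> poly u 0 \<noteq> 0)"
    using poly_factor_at_0 by blast
  then obtain e u where eu: "\<And>i. q i \<noteq> 0 \<Longrightarrow> q i = [:0,1:]^e i * u i \<and> poly (u i) 0 \<noteq> 0"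
    by metis
  define v where "v = (\<lambda>i. e i + 2 * (D - i))"
  define vmin where "vmin = Min (v ` I)"
  define J where "J = {i\<in>I. v i = vmin}"
  have "vmin \<in> v ` I" unfolding vmin_def using finI Ine by auto
  then have Jne: "J \<noteq> {}" unfolding J_def by auto
  have finJ: "finite J" using finI unfolding J_def by auto
  define i0 where "i0 = Max J"
  have i0J: "i0 \<in> J" unfolding i0_def using Jne finJ by auto
  have i0I: "i0 \<in> I" and vi0: "v i0 = vmin" using i0J unfolding J_def by auto
  have vmin_le: "\<And>i. i \<in> I \<Longrightarrow> vmin \<le> v i" unfolding vmin_def using finI by auto
  have maxi: "\<And>i. i \<in> I \<Longrightarrow> v i = vmin \<Longrightarrow> i \<le> i0" unfolding i0_def J_def using finJ J_def by auto
  have GnK: "norm (K s) = Gn s" for s unfolding K_def Gn_def by (simp add: norm_mult norm_power del: of_real_power)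
  have evpos: "\<forall>\<^sub>F s in at_right (0::real). 0 < s \<and> s < 1"
    unfolding eventually_at_right_field by (intro exI[of _ 1]) auto
  have evG: "\<forall>\<^sub>F s in at_right 0. Gn s > 1"
    using lim1 unfolding Gn_def filterlim_at_top_dense by blast
  define T where "T = (\<lambda>i s. complex_of_real s ^ (v i - v i0) * poly (u i) (of_real s) * (K s ^ i / K s ^ i0))"
  have ident: "\<forall>\<^sub>F s in at_right 0. (\<Sum>i\<in>I. T i s) = 0"
    using eq evpos evG
  proof eventually_elim
    case (elim s)
    have Kne: "K s \<noteq> 0" using elim GnK[of s] by auto
    have sne: "complex_of_real s \<noteq> 0" using elim by auto
    have "(\<Sum>i\<le>D. poly (q i) (of_real s) * H s ^ i) * of_real s ^ (2*D) = (\<Sum>i\<le>D. poly (q i) (of_real s) * H s ^ i * of_real s ^ (2*D))"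
      by (simp add: sum_distrib_right)
    also have "\<dots> = (\<Sum>i\<in>I. poly (q i) (of_real s) * H s ^ i * of_real s ^ (2*D))"
      by (rule sum.mono_neutral_right) (auto simp: I_def)
    also have "\<dots> = (\<Sum>i\<in>I. of_real s ^ v i0 * K s ^ i0 * T i s)"
    proof (rule sum.cong[OF refl])
      fix i assume iI: "i \<in> I"
      then have qi: "q i = [:0,1:]^e i * u i" and iD: "i \<le> D" using eu[of i] unfolding I_def by auto
      have vle: "v i0 \<le> v i" using vmin_le[OF iI] vi0 by simp
      have "poly (q i) (of_real s) * H s ^ i * of_real s ^ (2*D) = of_real s ^ (e i + 2*(D-i)) * poly (u i) (of_real s) * (of_real s ^ 2 * H s) ^ i"
      proof -
        obtain k where Dk: "D = i + k" using iD le_Suc_ex by blast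
        show ?thesis unfolding Dk by (simp add: qi poly_monom power_add power_mult_distrib flip: power_mult)
      qed
      also have "\<dots> = of_real s ^ v i * poly (u i) (of_real s) * K s ^ i" by (simp add: v_def K_def)
      also have "\<dots> = of_real s ^ v i0 * K s ^ i0 * T i s"
        using Kne vle unfolding T_def by (simp add: power_add[symmetric] field_simps)
      finally show "poly (q i) (of_real s) * H s ^ i * of_real s ^ (2*D) = of_real s ^ v i0 * K s ^ i0 * T i s" .
    qed
    also have "\<dots> = of_real s ^ v i0 * K s ^ i0 * (\<Sum>i\<in>I. T i s)" by (simp add: sum_distrib_left)
    finally show ?case using elim(1) Kne sne by simp
  qed
  have Tlim: "((\<lambda>s. T i s) \<longlongrightarrow> (if i = i0 then poly (u i0) 0 else 0)) (at_right 0)" if iI: "i \<in> I" for i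
  proof -
    have ucont: "((\<lambda>s. poly (u i) (complex_of_real s)) \<longlongrightarrow> poly (u i) 0) (at_right 0)"
    proof -
      have "((\<lambda>s. poly (u i) (complex_of_real s)) \<longlongrightarrow> poly (u i) (of_real 0)) (at_right 0)"
        by (intro tendsto_intros)
      then show ?thesis by simp
    qed
    show ?thesis
    proof (cases "i = i0")
      case True
      have "\<forall>\<^sub>F s in at_right 0. T i s = poly (u i0) (of_real s)"
        using evG proof eventually_elim
        case (elim s) then have "K s \<noteq> 0" using GnK[of s] by auto
        then show ?case using True by (simp add: T_def)
      qed
      then show ?thesis using True ucont by (simp add: tendsto_cong)
    next
      case False
      have vle: "v i0 \<le> v i" using vmin_le[OF iI] vi0 by simp
      show ?thesis
      proof (cases "i > i0")
        case True
        then have "v i \<noteq> v i0" using maxi[OF iI] vi0 by force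
        then have v1: "v i - v i0 \<ge> 1" using vle by simp
        have "((\<lambda>s. norm (poly (u i) (complex_of_real s)) * (s * Gn s ^ (i - i0))) \<longlongrightarrow> norm (poly (u i) 0) * 0) (at_right 0)"
          by (intro tendsto_intros ucont) (use lim2 in \<open>simp add: Gn_def\<close>)
        moreover have "\<forall>\<^sub>F s in at_right 0. norm (T i s) \<le> norm (poly (u i) (complex_of_real s)) * (s * Gn s ^ (i - i0))"
          using evG evpos proof eventually_elim
          case (elim s)
          then have Kne: "K s \<noteq> 0" using GnK[of s] by auto
          have "K s ^ i / K s ^ i0 = K s ^ (i - i0)" using Kne True
            by (simp add: power_diff)
          moreover have "s ^ (v i - v i0) \<le> s ^ 1"
            using elim v1 by (intro power_decreasing) auto
          ultimately have "norm (T i s) = s ^ (v i - v i0) * (norm (poly (u i) (complex_of_real s)) * Gn s ^ (i - i0))"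
            using elim unfolding T_def by (simp only: norm_mult norm_power GnK norm_of_real abs_of_pos)
          also have "\<dots> \<le> s * (norm (poly (u i) (complex_of_real s)) * Gn s ^ (i - i0))"
            using \<open>s ^ (v i - v i0) \<le> s ^ 1\<close> elim by (intro mult_right_mono) auto
          finally show ?case by (simp add: mult_ac)
        qed
        ultimately show ?thesis using False by (auto intro: Lim_null_comparison)
      next
        case False2: False
        then have lt: "i < i0" using False by simp
        have "((\<lambda>s. norm (poly (u i) (complex_of_real s)) * inverse (Gn s ^ (i0 - i))) \<longlongrightarrow> norm (poly (u i) 0) * 0) (at_right 0)"
          using lt by (intro tendsto_intros ucont tendsto_inverse_0_at_top filterlim_pow_at_top) (use lim1 in \<open>simp_all add: Gn_def\<close>)
        moreover have "\<forall>\<^sub>F s in at_right 0. norm (T i s) \<le> norm (poly (u i) (complex_of_real s)) * inverse (Gn s ^ (i0 - i))"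
          using evG evpos proof eventually_elim
          case (elim s)
          then have Kne: "K s \<noteq> 0" using GnK[of s] by auto
          have "K s ^ i / K s ^ i0 = inverse (K s ^ (i0 - i))" using Kne lt
            by (simp add: power_diff_conv_inverse field_simps)
          moreover have "s ^ (v i - v i0) \<le> 1"
            using elim by (intro power_le_one) auto
          ultimately have "norm (T i s) = s ^ (v i - v i0) * (norm (poly (u i) (complex_of_real s)) * inverse (Gn s ^ (i0 - i)))"
            using elim unfolding T_def by (simp only: norm_mult norm_power GnK norm_inverse norm_of_real abs_of_pos)
          also have "\<dots> \<le> 1 * (norm (poly (u i) (complex_of_real s)) * inverse (Gn s ^ (i0 - i)))"
            using \<open>s ^ (v i - v i0) \<le> 1\<close> elim by (intro mult_right_mono) auto
          finally show ?case by (simp add: mult_ac)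
        qed
        ultimately show ?thesis using False by (auto intro: Lim_null_comparison)
      qed
    qed
  qed
  have "((\<lambda>s. \<Sum>i\<in>I. T i s) \<longlongrightarrow> (\<Sum>i\<in>I. if i = i0 then poly (u i0) 0 else 0)) (at_right 0)"
    by (intro tendsto_sum Tlim)
  then have L1: "((\<lambda>s. \<Sum>i\<in>I. T i s) \<longlongrightarrow> poly (u i0) 0) (at_right 0)"
    using finI i0I by simp
  have L2: "((\<lambda>s. \<Sum>i\<in>I. T i s) \<longlongrightarrow> 0) (at_right 0)"
    using ident by (simp add: tendsto_eventually)
  have "poly (u i0) 0 = 0" using tendsto_unique[OF _ L1 L2] by simp
  moreover have "poly (u i0) 0 \<noteq> 0" using eu[of i0] i0I unfolding I_def by auto
  ultimately show False by simp
qed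

lemma fps_to_fls_sum: "fps_to_fls (\<Sum>i\<in>A. f i) = (\<Sum>i\<in>A. fps_to_fls (f i))"
  by (induction A rule: infinite_finite_induct) auto

lemma fps_to_fls_prod: "fps_to_fls (\<Prod>i\<in>A. f i :: complex fps) = (\<Prod>i\<in>A. fps_to_fls (f i))"
  by (induction A rule: infinite_finite_induct) (auto simp: fls_times_fps_to_fls)

lemma alg_rel:
  fixes F :: "complex fps"
  assumes "algebraic_over_rat_funs (fps_to_fls F)"
  shows "\<exists>c D. (\<exists>i\<le>D. c i \<noteq> 0) \<and> (\<Sum>i\<le>D. fps_of_poly (c i) * F ^ i) = 0"
proof -
  define \<iota> where "\<iota> = (\<lambda>p::complex poly. fps_to_fls (fps_of_poly p))"
  have \<iota>mult: "\<iota> (p * q) = \<iota> p * \<iota> q" for p q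
    unfolding \<iota>_def by (simp add: fps_of_poly_mult fls_times_fps_to_fls)
  have \<iota>prod: "\<iota> (\<Prod>j\<in>S. g j) = (\<Prod>j\<in>S. \<iota> (g j))" for S and g :: "nat \<Rightarrow> complex poly"
    unfolding \<iota>_def by (simp add: fps_of_poly_prod fps_to_fls_prod)
  have \<iota>nz: "\<iota> p \<noteq> 0 \<longleftrightarrow> p \<noteq> 0" for p
    unfolding \<iota>_def by (simp add: fps_of_poly_eq_iff[of p 0, simplified])
  obtain P :: "complex fls poly" where P: "P \<noteq> 0" "\<And>i. coeff P i \<in> rat_funs_fls" "poly P (fps_to_fls F) = 0"
    using assms unfolding algebraic_over_rat_funs_def by blast
  have "\<forall>i. \<exists>a b. b \<noteq> 0 \<and> coeff P i = \<iota> a / \<iota> b"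
    using P(2) unfolding rat_funs_fls_def \<iota>_def by blast
  then obtain A B where AB: "\<And>i. B i \<noteq> 0" "\<And>i. coeff P i = \<iota> (A i) / \<iota> (B i)"
    by metis
  define D where "D = degree P"
  define c where "c = (\<lambda>i. A i * (\<Prod>j\<in>{..D}-{i}. B j))"
  define Bp where "Bp = (\<Prod>j\<le>D. B j)"
  have ci: "\<iota> (c i) = coeff P i * \<iota> Bp" if "i \<le> D" for i
  proof -
    have "\<iota> Bp = \<iota> (B i) * (\<Prod>j\<in>{..D}-{i}. \<iota> (B j))"
      unfolding Bp_def \<iota>prod using that by (subst prod.remove[of _ i]) auto
    then show ?thesis unfolding c_def \<iota>mult \<iota>prod AB(2)
      using AB(1)[of i] \<iota>nz by (simp add: field_simps)
  qed
  have "(\<Sum>i\<le>D. \<iota> (c i) * fps_to_fls F ^ i) = \<iota> Bp * poly P (fps_to_fls F)"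
    by (simp add: ci poly_altdef D_def sum_distrib_left mult_ac)
  also have "\<dots> = 0" using P(3) by simp
  finally have "fps_to_fls (\<Sum>i\<le>D. fps_of_poly (c i) * F ^ i) = 0"
    unfolding fps_to_fls_sum \<iota>_def by (simp add: fls_times_fps_to_fls fps_to_fls_power)
  then have E: "(\<Sum>i\<le>D. fps_of_poly (c i) * F ^ i) = 0" by simp
  have "coeff P D \<noteq> 0" using P(1) unfolding D_def by simp
  then have "A D \<noteq> 0" using AB(2)[of D] \<iota>nz by auto
  then have "c D \<noteq> 0" unfolding c_def using AB(1) by (simp add: prod_zero_iff)
  then show ?thesis using E by blast
qed

lemma eval_fps_sum:
  fixes g :: "nat \<Rightarrow> complex fps"
  assumes "\<And>i. i \<in> A \<Longrightarrow> norm z < fps_conv_radius (g i)"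
  shows "norm z < fps_conv_radius (\<Sum>i\<in>A. g i) \<and> eval_fps (\<Sum>i\<in>A. g i) z = (\<Sum>i\<in>A. eval_fps (g i) z)"
  using assms
proof (induction A rule: infinite_finite_induct)
  case (insert x F)
  have r1: "norm z < fps_conv_radius (g x)" and r2: "norm z < fps_conv_radius (\<Sum>i\<in>F. g i)"
    using insert by auto
  have "norm z < min (fps_conv_radius (g x)) (fps_conv_radius (\<Sum>i\<in>F. g i))" using r1 r2 by simp
  also have "\<dots> \<le> fps_conv_radius (g x + (\<Sum>i\<in>F. g i))" by (rule fps_conv_radius_add)
  finally show ?case using insert r1 r2 by (simp add: eval_fps_add)
qed auto

lemma eval_rel:
  fixes F :: "complex fps"
  assumes "fps_conv_radius F \<ge> 1" "(\<Sum>i\<le>D. fps_of_poly (c i) * F ^ i) = 0" "norm z < 1"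
  shows "(\<Sum>i\<le>D. poly (c i) z * eval_fps F z ^ i) = 0"
proof -
  have "ereal (norm z) < 1" using assms(3) by simp
  then have zr: "norm z < fps_conv_radius F" using assms(1) by (rule less_le_trans)
  have rad: "norm z < fps_conv_radius (fps_of_poly (c i) * F ^ i)" for i
  proof -
    have "norm z < min (fps_conv_radius (fps_of_poly (c i))) (fps_conv_radius (F ^ i))"
      using zr fps_conv_radius_power[of F i] by simp
    also have "\<dots> \<le> fps_conv_radius (fps_of_poly (c i) * F ^ i)" by (rule fps_conv_radius_mult)
    finally show ?thesis .
  qed
  have "0 = eval_fps (\<Sum>i\<le>D. fps_of_poly (c i) * F ^ i) z" using assms(2) by simp
  also have "\<dots> = (\<Sum>i\<le>D. eval_fps (fps_of_poly (c i) * F ^ i) z)"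
    using eval_fps_sum[of "{..D}" z "\<lambda>i. fps_of_poly (c i) * F ^ i"] rad by simp
  also have "\<dots> = (\<Sum>i\<le>D. poly (c i) z * eval_fps F z ^ i)"
    using zr fps_conv_radius_power[of F] by (intro sum.cong refl) (simp add: eval_fps_mult eval_fps_power less_le_trans)
  finally show ?thesis by simp
qed

lemma transc_from_bounds:
  fixes a :: "nat \<Rightarrow> real"
  assumes nonneg: "\<And>n. a n \<ge> 0"
  and summ: "\<And>r. 0 < r \<Longrightarrow> r < 1 \<Longrightarrow> summable (\<lambda>n. a n * r ^ n)"
  and lim1: "filterlim (\<lambda>s. s^2 * (\<Sum>n. a n * (1-s)^n)) at_top (at_right 0)"
  and lim2: "\<And>m. ((\<lambda>s. s * (s^2 * (\<Sum>n. a n * (1-s)^n))^m) \<longlongrightarrow> 0) (at_right 0)"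
  shows "transcendental_over_rat_funs (fps_to_fls (Abs_fps (\<lambda>n. complex_of_real (a n))))"
  unfolding transcendental_over_rat_funs_def
proof
  define F where "F = Abs_fps (\<lambda>n. complex_of_real (a n))"
  assume "algebraic_over_rat_funs (fps_to_fls (Abs_fps (\<lambda>n. complex_of_real (a n))))"
  then obtain c D where cD: "\<exists>i\<le>D. c i \<noteq> 0" "(\<Sum>i\<le>D. fps_of_poly (c i) * F ^ i) = 0"
    using alg_rel unfolding F_def by blast
  have ev: "eval_fps F (of_real r) = of_real (\<Sum>n. a n * r ^ n)" if "0 < r" "r < 1" for r
    unfolding eval_fps_def F_def using summ[OF that]
    by (simp add: suminf_of_real)
  have rad: "fps_conv_radius F \<ge> 1"
    unfolding fps_conv_radius_def
  proof (rule conv_radius_geI_ex')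
    fix r :: real assume r: "0 < r" "ereal r < 1"
    then have "summable (\<lambda>n. complex_of_real (a n * r ^ n))"
      using summ[of r] by (simp add: summable_of_real_iff del: of_real_mult of_real_power)
    then show "summable (\<lambda>n. fps_nth F n * complex_of_real r ^ n)" by (simp add: F_def)
  qed
  define H where "H = (\<lambda>s. eval_fps F (of_real (1 - s)))"
  define q where "q = (\<lambda>i. pcompose (c i) [:1, -1:])"
  have evpos: "\<forall>\<^sub>F s in at_right (0::real). 0 < s \<and> s < 1"
    unfolding eventually_at_right_field by (intro exI[of _ 1]) auto
  have normH: "\<forall>\<^sub>F s in at_right 0. norm (H s) = (\<Sum>n. a n * (1-s)^n)"
    using evpos proof eventually_elim
    case (elim s)
    have "0 \<le> (\<Sum>n. a n * (1-s)^n)" using elim summ[of "1-s"] nonneg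
      by (intro suminf_nonneg) auto
    then show ?case unfolding H_def using ev[of "1-s"] elim by simp
  qed
  show False
  proof (rule dominant[of D q H])
    show "\<exists>i\<le>D. q i \<noteq> 0" using cD(1) unfolding q_def by (subst pcompose_eq_0_iff) auto
    show "filterlim (\<lambda>s. s\<^sup>2 * norm (H s)) at_top (at_right 0)"
      using lim1 by (rule filterlim_cong[THEN iffD1, rotated 3]) (use normH in \<open>auto elim: eventually_mono\<close>)
    show "((\<lambda>s. s * (s\<^sup>2 * norm (H s)) ^ m) \<longlongrightarrow> 0) (at_right 0)" for m
      using lim2[of m] by (rule tendsto_cong[THEN iffD1, rotated]) (use normH in \<open>auto elim: eventually_mono\<close>)
    show "\<forall>\<^sub>F s in at_right 0. (\<Sum>i\<le>D. poly (q i) (complex_of_real s) * H s ^ i) = 0"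
      using evpos proof eventually_elim
      case (elim s)
      have "(\<Sum>i\<le>D. poly (c i) (of_real (1-s)) * eval_fps F (of_real (1-s)) ^ i) = 0"
        using elim by (intro eval_rel[OF rad cD(2)]) (simp only: norm_of_real, simp)
      then show ?case unfolding q_def H_def by (simp add: poly_pcompose)
    qed
  qed
qed

lemma divsum_swap:
  fixes f :: "nat \<Rightarrow> nat \<Rightarrow> 'a::comm_monoid_add"
  shows "(\<Sum>n\<in>{1..N}. \<Sum>d\<in>{d. d dvd n}. f d (n div d)) = (\<Sum>d\<in>{1..N}. \<Sum>k\<in>{1..N div d}. f d k)"
proof -
  have fin: "\<forall>n\<in>{1..N}. finite {d. d dvd n}" by auto
  have "(\<Sum>n\<in>{1..N}. \<Sum>d\<in>{d. d dvd n}. f d (n div d)) = (\<Sum>(n,d)\<in>(SIGMA n:{1..N}. {d. d dvd n}). f d (n div d))"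
    by (subst sum.Sigma[OF _ fin]) auto
  also have "\<dots> = (\<Sum>(d,k)\<in>(SIGMA d:{1..N}. {1..N div d}). f d k)"
  proof (rule sum.reindex_bij_witness[of _ "\<lambda>(d,k). (d*k, d)" "\<lambda>(n,d). (d, n div d)"])
    fix y assume y: "y \<in> (SIGMA n:{1..N}. {d. d dvd n})"
    obtain n d where yy: "y = (n,d)" by (cases y)
    from y have n: "1 \<le> n" "n \<le> N" "d dvd n" by (auto simp: yy)
    then have dpos: "d > 0" by (metis dvd_0_left_iff not_gr0 not_one_le_zero)
    have "n div d \<ge> 1" using n dpos by (metis dvd_div_eq_0_iff less_one not_le not_one_le_zero)
    moreover have "n div d \<le> N div d" using n by (simp add: div_le_mono)
    moreover have "d \<le> N" using n dvd_imp_le[of d n] by linarith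
    ultimately show "(case (case y of (n, d) \<Rightarrow> (d, n div d)) of (d, k) \<Rightarrow> (d * k, d)) = y"
      "(case y of (n, d) \<Rightarrow> (d, n div d)) \<in> (SIGMA d:{1..N}. {1..N div d})"
      "(case (case y of (n, d) \<Rightarrow> (d, n div d)) of (d, k) \<Rightarrow> f d k) = (case y of (n, d) \<Rightarrow> f d (n div d))"
      using n dpos by (auto simp: yy)
  next
    fix x assume x: "x \<in> (SIGMA d:{1..N}. {1..N div d})"
    obtain d k where xx: "x = (d,k)" by (cases x)
    from x have d: "1 \<le> d" "d \<le> N" "1 \<le> k" "k \<le> N div d" by (auto simp: xx)
    have "d * k \<le> d * (N div d)" using d by simp
    also have "\<dots> \<le> N" by simp
    finally have "d * k \<le> N" .
    then show "(case (case x of (d, k) \<Rightarrow> (d * k, d)) of (n, d) \<Rightarrow> (d, n div d)) = x"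
      "(case x of (d, k) \<Rightarrow> (d * k, d)) \<in> (SIGMA n:{1..N}. {d. d dvd n})"
      using d by (auto simp: xx)
  qed
  also have "\<dots> = (\<Sum>d\<in>{1..N}. \<Sum>k\<in>{1..N div d}. f d k)"
    by (subst sum.Sigma) auto
  finally show ?thesis .
qed

lemma T_lower:
  "real N * (real N + 1) / 2 \<le> real N * (\<Sum>d\<in>{1..N}. real (totient d) / real d)"
proof -
  have "real N * (real N + 1) / 2 = (\<Sum>n\<in>{1..N}. real n)"
    using double_gauss_sum_from_Suc_0[of N, where 'a=real] by simp
  also have "\<dots> = (\<Sum>n\<in>{1..N}. \<Sum>d\<in>{d. d dvd n}. real (totient d))"
    by (intro sum.cong refl) (metis (mono_tags) of_nat_sum totient_divisor_sum Collect_cong)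
  also have "\<dots> = (\<Sum>d\<in>{1..N}. \<Sum>k\<in>{1..N div d}. real (totient d))"
    using divsum_swap[of "\<lambda>d k. real (totient d)" N] by simp
  also have "\<dots> = (\<Sum>d\<in>{1..N}. real (totient d) * real (N div d))"
    by (simp add: mult.commute)
  also have "\<dots> \<le> (\<Sum>d\<in>{1..N}. real (totient d) * (real N / real d))"
    by (intro sum_mono mult_left_mono of_nat_div_le_of_nat) auto
  also have "\<dots> = real N * (\<Sum>d\<in>{1..N}. real (totient d) / real d)"
    by (simp add: sum_distrib_left mult.commute)
  finally show ?thesis .
qed

lemma T_upper: "(\<Sum>d\<in>{1..N}. real (totient d) / real d) \<le> real N"
proof -
  have "(\<Sum>d\<in>{1..N}. real (totient d) / real d) \<le> (\<Sum>d\<in>{1..N}. 1)"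
    by (intro sum_mono) (auto simp: totient_le)
  then show ?thesis by simp
qed

lemma T_lower': "N \<ge> 1 \<Longrightarrow> (real N + 1) / 2 \<le> (\<Sum>d\<in>{1..N}. real (totient d) / real d)"
proof -
  assume N: "N \<ge> 1"
  have "real N * ((real N + 1) / 2) \<le> real N * (\<Sum>d\<in>{1..N}. real (totient d) / real d)"
    using T_lower[of N] by (simp only: times_divide_eq_right)
  then show ?thesis using N by (subst (asm) mult_le_cancel_left_pos) auto
qed

lemma block_bound:
  assumes "N \<ge> 1"
  shows "(\<Sum>d\<in>{N<..4*N}. real (totient d) / real d ^ 2) \<ge> 1/4"
proof -
  have split: "{1..4*N} = {1..N} \<union> {N<..4*N}" by auto
  have T4: "(\<Sum>d\<in>{1..4*N}. real (totient d) / real d) = (\<Sum>d\<in>{1..N}. real (totient d) / real d) + (\<Sum>d\<in>{N<..4*N}. real (totient d) / real d)"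
    unfolding split by (rule sum.union_disjoint) auto
  have "(real (4*N) + 1) / 2 \<le> (\<Sum>d\<in>{1..4*N}. real (totient d) / real d)"
    using assms by (intro T_lower') auto
  then have "real N \<le> (\<Sum>d\<in>{N<..4*N}. real (totient d) / real d)"
    using T4 T_upper[of N] by simp
  then have "1/4 \<le> (\<Sum>d\<in>{N<..4*N}. real (totient d) / real d) / (4 * real N)"
    using assms by (simp add: field_simps)
  also have "\<dots> = (\<Sum>d\<in>{N<..4*N}. real (totient d) / real d / (4 * real N))"
    by (simp add: sum_divide_distrib)
  also have "\<dots> \<le> (\<Sum>d\<in>{N<..4*N}. real (totient d) / real d ^ 2)"
  proof (intro sum_mono)
    fix d assume d: "d \<in> {N<..4*N}"
    then have "real d \<le> 4 * real N" "real d > 0" by auto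
    then show "real (totient d) / real d / (4 * real N) \<le> real (totient d) / real d ^ 2"
      by (simp add: power2_eq_square divide_simps mult_left_mono)
  qed
  finally show ?thesis .
qed

lemma phi_sq_diverge: "(\<Sum>d\<in>{1..4^J}. real (totient d) / real d ^ 2) \<ge> real J / 4"
proof (induction J)
  case 0 then show ?case by (simp add: sum_nonneg)
next
  case (Suc J)
  have split: "{1..4^Suc J :: nat} = {1..4^J} \<union> {4^J<..4*4^J}" by auto
  have "(\<Sum>d\<in>{1..4^Suc J}. real (totient d) / real d ^ 2) = (\<Sum>d\<in>{1..4^J}. real (totient d) / real d ^ 2) + (\<Sum>d\<in>{4^J<..4*4^J}. real (totient d) / real d ^ 2)"
    unfolding split by (rule sum.union_disjoint) auto
  moreover have "(\<Sum>d\<in>{4^J<..4*4^J}. real (totient d) / real d ^ 2) \<ge> 1/4"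
    by (rule block_bound) simp
  ultimately show ?case using Suc.IH by simp
qed

lemma phi_sq_unbounded: "\<exists>D\<ge>1. (\<Sum>d\<in>{1..D}. real (totient d) / real d ^ 2) \<ge> B"
proof -
  obtain J :: nat where "real J \<ge> 4 * B" using real_arch_simple by blast
  then show ?thesis using phi_sq_diverge[of J] by (intro exI[of _ "4^J"]) auto
qed

lemma pow_low: "0 \<le> (r::real) \<Longrightarrow> r \<le> 1 \<Longrightarrow> 1 - real d * (1-r) \<le> r^d"
proof -
  assume "0 \<le> r" "r \<le> 1"
  have "1 - real d * (1-r) = 1 + real d * (r - 1)" by (simp add: algebra_simps)
  then show ?thesis using Bernoulli_inequality[of "r - 1" d] \<open>0 \<le> r\<close> by simp
qed

lemma one_minus_pow_ge: "0 \<le> (r::real) \<Longrightarrow> r \<le> 1 \<Longrightarrow> real d * (1-r) * r^d \<le> 1 - r^d"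
proof (induction d)
  case 0 then show ?case by simp
next
  case (Suc d)
  have rd: "0 \<le> r^d" "r^d \<le> 1" using Suc.prems by (auto simp: power_le_one)
  have rr: "r * r^d \<le> r^d" using rd Suc.prems by (simp add: mult_left_le_one_le)
  have "real (Suc d) * (1-r) * r^Suc d = r * (real d * (1-r) * r^d) + r * r^d * (1 - r)" by (simp add: algebra_simps)
  also have "\<dots> \<le> 1 * (1 - r^d) + r^d * (1 - r)"
    using Suc rd rr by (intro add_mono mult_mono) (auto simp: mult_le_one)
  also have "\<dots> = 1 - r^Suc d" by (simp add: algebra_simps)
  finally show ?case .
qed

lemma pow_up: "0 \<le> (s::real) \<Longrightarrow> s \<le> 1 \<Longrightarrow> (1-s)^n \<le> 1 / (1 + real n * s)"
proof -
  assume s: "0 \<le> s" "s \<le> 1"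
  have b: "1 + real n * s \<le> (1+s)^n" using Bernoulli_inequality[of s n] s by simp
  have pos: "0 < 1 + real n * s" using s by (simp add: add_pos_nonneg)
  have "(1-s)^n * (1+s)^n = (1 - s^2)^n" by (simp add: power_mult_distrib[symmetric] algebra_simps power2_eq_square)
  also have "\<dots> \<le> 1" using s by (intro power_le_one) (auto simp: power_le_one)
  finally have "(1-s)^n * (1+s)^n \<le> 1" .
  then have "(1-s)^n * (1 + real n * s) \<le> 1"
    using b s by (smt (verit, best) mult_left_mono zero_le_power)
  then show ?thesis using pos by (simp add: field_simps)
qed

lemma sum_kq:
  fixes q :: real
  assumes "0 \<le> q" "q < 1"
  shows "(\<lambda>K. \<Sum>k\<in>{1..K}. real k * q^k) \<longlonglongrightarrow> q / (1-q)^2"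
    and "(\<Sum>k\<in>{1..K}. real k * q^k) \<le> q / (1-q)^2"
proof -
  have "(\<lambda>n. real (Suc n) * q ^ n) sums (1 / (1 - q)^2)"
    using geometric_deriv_sums[of q] assms by simp
  then have S: "(\<lambda>n. q * (real (Suc n) * q ^ n)) sums (q * (1 / (1 - q)^2))"
    by (rule sums_mult)
  have eq: "(\<Sum>k\<in>{1..K}. real k * q^k) = (\<Sum>n<K. q * (real (Suc n) * q ^ n))" for K
    by (induction K) (auto simp: algebra_simps)
  show "(\<lambda>K. \<Sum>k\<in>{1..K}. real k * q^k) \<longlonglongrightarrow> q / (1-q)^2"
    using S unfolding sums_def eq by simp
  have "(\<Sum>n<K. q * (real (Suc n) * q ^ n)) \<le> q * (1 / (1 - q)^2)"
    using S assms by (intro sum_le_suminf[of _ "{..<K}", THEN order_trans]) (auto simp: sums_iff)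
  then show "(\<Sum>k\<in>{1..K}. real k * q^k) \<le> q / (1-q)^2" unfolding eq by simp
qed

lemma term_bound:
  fixes r :: real
  assumes r: "0 < r" "r < 1" and d: "d \<ge> 1"
  defines "M \<equiv> nat \<lfloor>1 / (2 * (1-r))\<rfloor>"
  shows "real d * (r^d / (1-r^d)^2) \<le> (if d \<le> M then 2 / (real d * (1-r)^2) else 9 * (real d * r^d))"
proof -
  define s where "s = 1 - r"
  have s: "0 < s" "s < 1" using r by (auto simp: s_def)
  have "r^d \<le> r^1" using r d by (intro power_decreasing) auto
  then have rd: "0 < r^d" "r^d < 1" using r by auto
  define x where "x = 1 / (2 * s)"
  have fx: "0 \<le> \<lfloor>x\<rfloor>" using s by (simp add: x_def)
  have Mx: "real M = of_int \<lfloor>x\<rfloor>" unfolding M_def using fx by (simp add: x_def s_def)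
  have Mle: "real M \<le> x" and Mgt: "x < real M + 1" unfolding Mx using floor_correct[of x] by auto
  show ?thesis
  proof (cases "d \<le> M")
    case True
    have "real M \<le> 1 / (2 * s)" using Mle by (simp add: x_def)
    then have Ms: "real M * s \<le> 1/2" using s by (simp add: field_simps)
    have "1/2 \<le> 1 - real M * s" using Ms by simp
    also have "\<dots> \<le> r^M" using pow_low[of r M] r by (simp add: s_def)
    also have "\<dots> \<le> r^d" using True r by (intro power_decreasing) auto
    finally have half: "1/2 \<le> r^d" .
    have low: "real d * s * r^d \<le> 1 - r^d" using one_minus_pow_ge[of r d] r by (simp add: s_def)
    have pos: "0 < real d * s * r^d" using d s rd by simp
    have "(real d * s * r^d)^2 \<le> (1 - r^d)^2" using low pos by (intro power_mono) auto
    moreover have "0 < (1 - r^d)^2 * (real d * s * r^d)^2"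
    proof (rule mult_pos_pos)
      show "0 < (1 - r^d)^2" using rd(2) by (intro zero_less_power) simp
      show "0 < (real d * s * r^d)^2" using pos by (intro zero_less_power)
    qed
    ultimately have "real d * (r^d / (1-r^d)^2) \<le> real d * (r^d / (real d * s * r^d)^2)"
      using rd by (intro mult_left_mono divide_left_mono) auto
    also have "\<dots> = 1 / (real d * s^2 * r^d)" using rd d s by (simp add: field_simps power2_eq_square)
    also have "\<dots> \<le> 1 / (real d * s^2 * (1/2))" using half d s by (intro divide_left_mono mult_left_mono) auto
    also have "\<dots> = 2 / (real d * (1-r)^2)" by (simp add: s_def)
    finally show ?thesis using True by simp
  next
    case False
    have "1 / (2 * s) < real M + 1" using Mgt by (simp add: x_def)
    then have Ms: "1/2 < (real M + 1) * s" using s by (simp add: field_simps)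
    have "r^d \<le> r^(M+1)" using False r by (intro power_decreasing) auto
    also have "\<dots> \<le> 1 / (1 + real (M+1) * s)" using pow_up[of s "M+1"] s by (simp add: s_def)
    also have "\<dots> \<le> 1 / (1 + 1/2)" using Ms s by (intro divide_left_mono) (auto simp: add_pos_pos algebra_simps)
    finally have q23: "r^d \<le> 2/3" by simp
    have "(1/3)^2 \<le> (1 - r^d)^2" using q23 by (intro power_mono) auto
    then have "real d * (r^d / (1-r^d)^2) \<le> real d * (r^d / (1/3)^2)"
      using rd d by (intro mult_left_mono divide_left_mono) auto
    also have "\<dots> = 9 * (real d * r^d)" by (simp add: power2_eq_square)
    finally show ?thesis using False by simp
  qed
qed

definition bt :: "nat \<Rightarrow> real" where
  "bt n = (if n = 0 then 0 else (\<Sum>d\<in>{d. d dvd n}. real (totient d) / real d) * real n)"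

lemma bt_alt: "n \<ge> 1 \<Longrightarrow> bt n = (\<Sum>d\<in>{d. d dvd n}. real (totient d) * real (n div d))"
  unfolding bt_def by (auto simp: sum_distrib_right real_of_nat_div intro!: sum.cong)

lemma bt_nonneg: "bt n \<ge> 0"
  unfolding bt_def by (auto intro!: sum_nonneg mult_nonneg_nonneg divide_nonneg_nonneg)

lemma bt_0 [simp]: "bt 0 = 0" by (simp add: bt_def)

lemma partial_le_from1:
  fixes f :: "nat \<Rightarrow> real"
  assumes "f 0 = 0" "\<And>n. 0 \<le> f n"
  shows "(\<Sum>n<N. f n) \<le> (\<Sum>n\<in>{1..N}. f n)"
proof -
  have "(\<Sum>n<N. f n) = (\<Sum>n\<in>{1..<N}. f n)"
    using assms(1) by (intro sum.mono_neutral_right) (auto simp: Suc_le_eq)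
  also have "\<dots> \<le> (\<Sum>n\<in>{1..N}. f n)" using assms(2) by (intro sum_mono2) auto
  finally show ?thesis .
qed

lemma pow_div_eq: "d dvd n \<Longrightarrow> (r::real)^n = (r^d)^(n div d)"
  by (metis dvd_mult_div_cancel power_mult)

lemma bt_sum_expand:
  "(\<Sum>n\<in>{1..N}. bt n * r^n) = (\<Sum>d\<in>{1..N}. \<Sum>k\<in>{1..N div d}. real (totient d) * (real k * (r^d)^k))"
proof -
  have "(\<Sum>n\<in>{1..N}. bt n * r^n) = (\<Sum>n\<in>{1..N}. \<Sum>d\<in>{d. d dvd n}. (\<lambda>d k. real (totient d) * (real k * (r^d)^k)) d (n div d))"
  proof (intro sum.cong refl)
    fix n assume n: "n \<in> {1..N}"
    have "bt n * r^n = (\<Sum>d\<in>{d. d dvd n}. real (totient d) * real (n div d) * r^n)"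
      using n by (simp add: bt_alt sum_distrib_right)
    also have "\<dots> = (\<Sum>d\<in>{d. d dvd n}. real (totient d) * (real (n div d) * (r^d)^(n div d)))"
      by (intro sum.cong refl) (simp add: pow_div_eq[symmetric])
    finally show "bt n * r^n = (\<Sum>d\<in>{d. d dvd n}. (\<lambda>d k. real (totient d) * (real k * (r^d)^k)) d (n div d))" by simp
  qed
  also have "\<dots> = (\<Sum>d\<in>{1..N}. \<Sum>k\<in>{1..N div d}. real (totient d) * (real k * (r^d)^k))"
    by (rule divsum_swap)
  finally show ?thesis .
qed

lemma bt_upper_partial:
  fixes r :: real
  assumes r: "0 < r" "r < 1"
  defines "M \<equiv> nat \<lfloor>1 / (2 * (1-r))\<rfloor>"
  shows "(\<Sum>n<N. bt n * r^n) \<le> (2 * harm M + 9) / (1-r)^2"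
proof -
  define s where "s = 1 - r"
  have s: "0 < s" "s < 1" using r by (auto simp: s_def)
  have "(\<Sum>n<N. bt n * r^n) \<le> (\<Sum>n\<in>{1..N}. bt n * r^n)"
    using r by (intro partial_le_from1) (auto intro!: mult_nonneg_nonneg bt_nonneg)
  also have "\<dots> = (\<Sum>d\<in>{1..N}. \<Sum>k\<in>{1..N div d}. real (totient d) * (real k * (r^d)^k))"
    by (rule bt_sum_expand)
  also have "\<dots> \<le> (\<Sum>d\<in>{1..N}. real d * (\<Sum>k\<in>{1..N div d}. real k * (r^d)^k))"
    unfolding sum_distrib_left
    using r by (intro sum_mono mult_right_mono) (auto simp: totient_le)
  also have "\<dots> \<le> (\<Sum>d\<in>{1..N}. real d * (r^d / (1 - r^d)^2))"
  proof (intro sum_mono mult_left_mono)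
    fix d assume d: "d \<in> {1..N}"
    have "r^d \<le> r^1" using r d by (intro power_decreasing) auto
    then show "(\<Sum>k\<in>{1..N div d}. real k * (r^d)^k) \<le> r^d / (1 - r^d)^2"
      using r by (intro sum_kq(2)) auto
  qed auto
  also have "\<dots> \<le> (\<Sum>d\<in>{1..N}. (if d \<le> M then 2 / (real d * s^2) else 0) + 9 * (real d * r^d))"
  proof (intro sum_mono)
    fix d assume d: "d \<in> {1..N}"
    have "real d * (r^d / (1-r^d)^2) \<le> (if d \<le> M then 2 / (real d * (1-r)^2) else 9 * (real d * r^d))"
      using term_bound[of r d] r d unfolding M_def by auto
    also have "\<dots> \<le> (if d \<le> M then 2 / (real d * s^2) else 0) + 9 * (real d * r^d)"
      using r by (auto simp: s_def)
    finally show "real d * (r^d / (1-r^d)^2) \<le> (if d \<le> M then 2 / (real d * s^2) else 0) + 9 * (real d * r^d)" .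
  qed
  also have "\<dots> = (\<Sum>d\<in>{1..N}. (if d \<le> M then 2 / (real d * s^2) else 0)) + 9 * (\<Sum>d\<in>{1..N}. real d * r^d)"
    by (simp add: sum.distrib sum_distrib_left)
  also have "\<dots> \<le> 2 * harm M / s^2 + 9 * (1 / s^2)"
  proof (intro add_mono mult_left_mono)
    have "(\<Sum>d\<in>{1..N}. (if d \<le> M then 2 / (real d * s^2) else 0)) = (\<Sum>d\<in>{1..N}. (if d \<in> {..M} then 2 / (real d * s^2) else 0))"
      by simp
    also have "\<dots> = (\<Sum>d\<in>{1..N} \<inter> {..M}. 2 / (real d * s^2))"
      by (rule sum.inter_restrict[symmetric]) simp
    also have "\<dots> \<le> (\<Sum>d\<in>{1..M}. 2 / (real d * s^2))"
      by (intro sum_mono2) auto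
    also have "\<dots> = 2 * harm M / s^2"
      by (simp add: harm_def sum_divide_distrib sum_distrib_left field_simps)
    finally show "(\<Sum>d\<in>{1..N}. (if d \<le> M then 2 / (real d * s^2) else 0)) \<le> 2 * harm M / s^2" .
    have "(\<Sum>d\<in>{1..N}. real d * r^d) \<le> r / (1-r)^2" using r by (intro sum_kq(2)) auto
    also have "\<dots> \<le> 1 / s^2" using r s by (simp add: s_def divide_right_mono)
    finally show "(\<Sum>d\<in>{1..N}. real d * r^d) \<le> 1 / s^2" .
  qed auto
  also have "\<dots> = (2 * harm M + 9) / (1-r)^2" by (simp add: s_def add_divide_distrib)
  finally show ?thesis .
qed

lemma bt_summable: "0 < r \<Longrightarrow> r < 1 \<Longrightarrow> summable (\<lambda>n. bt n * r^n)"
proof (rule summableI_nonneg_bounded[where x = "(2 * harm (nat \<lfloor>1 / (2 * (1-r))\<rfloor>) + 9) / (1-r)^2"])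
  fix n assume "0 < r" "r < 1"
  then show "0 \<le> bt n * r^n" by (intro mult_nonneg_nonneg bt_nonneg) auto
  show "(\<Sum>i<n. bt i * r^i) \<le> (2 * harm (nat \<lfloor>1 / (2 * (1-r))\<rfloor>) + 9) / (1-r)^2"
    by (rule bt_upper_partial) fact+
qed

lemma bt_suminf_upper:
  "0 < r \<Longrightarrow> r < 1 \<Longrightarrow> (\<Sum>n. bt n * r^n) \<le> (2 * harm (nat \<lfloor>1 / (2 * (1-r))\<rfloor>) + 9) / (1-r)^2"
  by (rule suminf_le_const[OF bt_summable], assumption+, rule bt_upper_partial)

lemma bt_suminf_lower:
  fixes r :: real
  assumes r: "0 < r" "r < 1" and D: "D \<ge> 1"
  shows "(\<Sum>d\<in>{1..D}. real (totient d) * (r^d / (1-r^d)^2)) \<le> (\<Sum>n. bt n * r^n)"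
proof (rule LIMSEQ_le_const2)
  have rd: "0 \<le> r^d" "r^d < 1" if "d \<in> {1..D}" for d
  proof -
    have "r^d \<le> r^1" using r that by (intro power_decreasing) auto
    then show "0 \<le> r^d" "r^d < 1" using r by auto
  qed
  show "(\<lambda>K. \<Sum>d\<in>{1..D}. real (totient d) * (\<Sum>k\<in>{1..K}. real k * (r^d)^k)) \<longlonglongrightarrow> (\<Sum>d\<in>{1..D}. real (totient d) * (r^d / (1-r^d)^2))"
    using rd by (intro tendsto_sum tendsto_mult_left sum_kq(1)) auto
  show "\<exists>N. \<forall>K\<ge>N. (\<Sum>d\<in>{1..D}. real (totient d) * (\<Sum>k\<in>{1..K}. real k * (r^d)^k)) \<le> (\<Sum>n. bt n * r^n)"
  proof (intro exI[of _ 1] allI impI)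
    fix K :: nat assume K: "K \<ge> 1"
    have nn: "0 \<le> real (totient d) * (real k * (r^d)^k)" for d k using r by simp
    have "(\<Sum>d\<in>{1..D}. real (totient d) * (\<Sum>k\<in>{1..K}. real k * (r^d)^k))
        = (\<Sum>d\<in>{1..D}. \<Sum>k\<in>{1..K}. real (totient d) * (real k * (r^d)^k))"
      by (simp add: sum_distrib_left)
    also have "\<dots> \<le> (\<Sum>d\<in>{1..D}. \<Sum>k\<in>{1..D*K div d}. real (totient d) * (real k * (r^d)^k))"
    proof (intro sum_mono sum_mono2)
      fix d assume d: "d \<in> {1..D}"
      have "K * d \<le> D * K" using d by (simp add: mult.commute)
      then have "K \<le> D * K div d" using d by (subst less_eq_div_iff_mult_less_eq) auto
      then show "{1..K} \<subseteq> {1..D * K div d}" by auto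
    qed (use nn in auto)
    also have "\<dots> \<le> (\<Sum>d\<in>{1..D*K}. \<Sum>k\<in>{1..D*K div d}. real (totient d) * (real k * (r^d)^k))"
      using K by (intro sum_mono2 sum_nonneg nn) auto
    also have "\<dots> = (\<Sum>n\<in>{1..D*K}. bt n * r^n)"
      by (rule bt_sum_expand[symmetric])
    also have "\<dots> \<le> (\<Sum>n<D*K+1. bt n * r^n)"
      using r by (intro sum_mono2) (auto intro!: mult_nonneg_nonneg bt_nonneg)
    also have "\<dots> \<le> (\<Sum>n. bt n * r^n)"
      using r by (intro sum_le_suminf bt_summable) (auto intro!: mult_nonneg_nonneg bt_nonneg)
    finally show "(\<Sum>d\<in>{1..D}. real (totient d) * (\<Sum>k\<in>{1..K}. real k * (r^d)^k)) \<le> (\<Sum>n. bt n * r^n)" .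
  qed
qed

lemma bt_G_lower:
  fixes r :: real
  assumes r: "0 < r" "r < 1" and D: "D \<ge> 1"
  shows "r^D * (\<Sum>d\<in>{1..D}. real (totient d) / real d ^ 2) \<le> (1-r)^2 * (\<Sum>n. bt n * r^n)"
proof -
  define s where "s = 1 - r"
  have s: "0 < s" "s < 1" using r by (auto simp: s_def)
  have "r^D * (\<Sum>d\<in>{1..D}. real (totient d) / real d ^ 2) = s^2 * (\<Sum>d\<in>{1..D}. real (totient d) * (r^D / (real d * s)^2))"
    using s by (simp add: sum_distrib_left power_mult_distrib field_simps)
  also have "\<dots> \<le> s^2 * (\<Sum>d\<in>{1..D}. real (totient d) * (r^d / (1-r^d)^2))"
  proof (intro mult_left_mono sum_mono)
    fix d assume d: "d \<in> {1..D}"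
    have "r^d \<le> r^1" using r d by (intro power_decreasing) auto
    then have rd: "0 < r^d" "r^d < 1" using r by auto
    have "1 - real d * (1-r) \<le> r^d" using pow_low[of r d] r by simp
    then have a: "1 - r^d \<le> real d * s" by (simp add: s_def)
    have b: "r^D \<le> r^d" using r d by (intro power_decreasing) auto
    show "r^D / (real d * s)^2 \<le> r^d / (1-r^d)^2"
      using a b rd by (intro frac_le power_mono) auto
  qed auto
  also have "\<dots> \<le> s^2 * (\<Sum>n. bt n * r^n)"
    using r D by (intro mult_left_mono bt_suminf_lower) auto
  finally show ?thesis by (simp add: s_def)
qed

lemma bt_lim1: "filterlim (\<lambda>s. s^2 * (\<Sum>n. bt n * (1-s)^n)) at_top (at_right 0)"
  unfolding filterlim_at_top
proof
  fix Z :: real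
  obtain D where D: "D \<ge> 1" "(\<Sum>d\<in>{1..D}. real (totient d) / real d ^ 2) \<ge> 2 * \<bar>Z\<bar>"
    using phi_sq_unbounded by blast
  have "((\<lambda>s. (1-s)^D) \<longlongrightarrow> (1 - 0)^D) (at_right (0::real))"
    by (intro tendsto_intros)
  then have ev1: "\<forall>\<^sub>F s in at_right (0::real). 1/2 < (1-s)^D"
    by (intro order_tendstoD(1)) auto
  have ev2: "\<forall>\<^sub>F s in at_right (0::real). 0 < s \<and> s < 1"
    unfolding eventually_at_right_field by (intro exI[of _ 1]) auto
  show "\<forall>\<^sub>F s in at_right 0. Z \<le> s^2 * (\<Sum>n. bt n * (1-s)^n)"
    using ev1 ev2
  proof eventually_elim
    case (elim s)
    have "Z \<le> (1/2) * (2 * \<bar>Z\<bar>)" by simp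
    also have "\<dots> \<le> (1-s)^D * (\<Sum>d\<in>{1..D}. real (totient d) / real d ^ 2)"
      using elim D by (intro mult_mono) auto
    also have "\<dots> \<le> (1 - (1-s))^2 * (\<Sum>n. bt n * (1-s)^n)"
      using elim D by (intro bt_G_lower) auto
    finally show ?case by simp
  qed
qed

lemma bt_G_upper:
  fixes s :: real
  assumes s: "0 < s" "s < 1"
  shows "s^2 * (\<Sum>n. bt n * (1-s)^n) \<le> 2 * ln (1/s) + 11"
proof -
  define M where "M = nat \<lfloor>1 / (2 * s)\<rfloor>"
  have "(\<Sum>n. bt n * (1-s)^n) \<le> (2 * harm M + 9) / s^2"
    using bt_suminf_upper[of "1-s"] s by (simp add: M_def)
  then have A: "s^2 * (\<Sum>n. bt n * (1-s)^n) \<le> 2 * harm M + 9"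
    using s by (simp add: field_simps)
  have L: "0 < ln (1/s)" using s by simp
  have H: "harm M \<le> ln (1/s) + 1"
  proof (cases "M = 0")
    case True then show ?thesis using L by (simp add: harm_def)
  next
    case False
    have "harm M - ln (real M) \<le> harm 1 - ln (real 1)"
      using False by (intro euler_mascheroni_sequence_decreasing) auto
    then have h1: "harm M \<le> ln (real M) + 1" by (simp add: harm_def)
    have fx: "0 \<le> \<lfloor>1 / (2 * s)\<rfloor>" using s by simp
    have "real M \<le> 1 / (2 * s)" unfolding M_def using fx floor_correct[of "1 / (2 * s)"] by simp
    also have "\<dots> \<le> 1 / s" using s by (simp add: field_simps)
    finally have "ln (real M) \<le> ln (1/s)" using False by (intro ln_mono) auto
    then show ?thesis using h1 by simp
  qed
  show ?thesis using A H by simp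
qed

lemma slog_lim: "((\<lambda>s::real. s * (ln (1/s) + 1) ^ m) \<longlongrightarrow> 0) (at_right 0)"
proof -
  have f: "filterlim (\<lambda>s::real. ln (1/s) + 1) at_top (at_right 0)" by real_asymp
  have "((\<lambda>s. exp 1 * ((\<lambda>x. x ^ m / exp x) (ln (1/s) + 1))) \<longlongrightarrow> exp 1 * 0) (at_right (0::real))"
    by (intro tendsto_mult_left filterlim_compose[OF tendsto_power_div_exp_0 f])
  moreover have "\<forall>\<^sub>F s in at_right (0::real). exp 1 * ((\<lambda>x. x ^ m / exp x) (ln (1/s) + 1)) = s * (ln (1/s) + 1) ^ m"
    unfolding eventually_at_right_field
  proof (intro exI[of _ 1] conjI allI impI)
    fix s :: real assume s: "0 < s" "s < 1"
    have "exp (ln (1/s) + 1) = exp 1 / s" using s by (simp add: exp_add)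
    then show "exp 1 * ((\<lambda>x. x ^ m / exp x) (ln (1/s) + 1)) = s * (ln (1/s) + 1) ^ m"
      using s by simp
  qed simp
  ultimately show ?thesis by (simp add: tendsto_cong)
qed

lemma lim2_helper:
  fixes G :: "real \<Rightarrow> real"
  assumes "\<forall>\<^sub>F s in at_right 0. 0 \<le> G s \<and> G s \<le> 2 * ln (1/s) + 11"
  shows "((\<lambda>s. s * G s ^ m) \<longlongrightarrow> 0) (at_right 0)"
proof (rule Lim_null_comparison)
  have ev2: "\<forall>\<^sub>F s in at_right (0::real). 0 < s \<and> s < 1"
    unfolding eventually_at_right_field by (intro exI[of _ 1]) auto
  show "\<forall>\<^sub>F s in at_right 0. norm (s * G s ^ m) \<le> (11::real)^m * (s * (ln (1/s) + 1) ^ m)"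
    using assms ev2
  proof eventually_elim
    case (elim s)
    have L: "0 \<le> ln (1/s)" using elim by simp
    have e: "G s \<le> 2 * ln (1/s) + 11" using elim by blast
    have g: "G s \<le> 11 * (ln (1/s) + 1)" unfolding distrib_left using e L by linarith
    have "G s ^ m \<le> (11 * (ln (1/s) + 1)) ^ m" using elim g by (intro power_mono) auto
    then have "s * G s ^ m \<le> s * (11 * (ln (1/s) + 1)) ^ m" using elim by (intro mult_left_mono) auto
    also have "\<dots> = 11^m * (s * (ln (1/s) + 1) ^ m)" by (simp only: power_mult_distrib mult_ac)
    finally have "s * G s ^ m \<le> 11^m * (s * (ln (1/s) + 1) ^ m)" .
    moreover have "norm (s * G s ^ m) = s * G s ^ m" using elim by simp
    ultimately show ?case by simp
  qed
  show "((\<lambda>s. (11::real)^m * (s * (ln (1/s) + 1) ^ m)) \<longlongrightarrow> 0) (at_right 0)"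
    using tendsto_mult_left[OF slog_lim, of "11^m" m] by simp
qed

lemma pillai_nat:
  assumes N: "N > 0"
  shows "(\<Sum>m\<in>{1..N}. gcd m N) = (\<Sum>d\<in>{d. d dvd N}. totient d * (N div d))"
proof -
  have fin: "finite {d. d dvd N}" using N by auto
  have "(\<Sum>m\<in>{1..N}. gcd m N) = (\<Sum>d\<in>{d. d dvd N}. \<Sum>m\<in>{m\<in>{1..N}. gcd m N = d}. gcd m N)"
    using fin by (intro sum.group[symmetric]) auto
  also have "\<dots> = (\<Sum>d\<in>{d. d dvd N}. d * totient (N div d))"
  proof (intro sum.cong refl)
    fix d assume d: "d \<in> {d. d dvd N}"
    have "(\<Sum>m\<in>{m\<in>{1..N}. gcd m N = d}. gcd m N) = (\<Sum>m\<in>{m\<in>{1..N}. gcd m N = d}. d)"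
      by (intro sum.cong) auto
    also have "\<dots> = d * card {m\<in>{1..N}. gcd m N = d}" by simp
    also have "card {m\<in>{1..N}. gcd m N = d} = totient (N div d)"
    proof -
      have c: "card {k\<in>{0<..N}. gcd k N = d} = totient (N div d)" using N d by (intro card_gcd_eq_totient) auto
      have e: "{m\<in>{1..N}. gcd m N = d} = {k\<in>{0<..N}. gcd k N = d}" by auto
      show ?thesis unfolding e by (rule c)
    qed
    finally show "(\<Sum>m\<in>{m\<in>{1..N}. gcd m N = d}. gcd m N) = d * totient (N div d)" .
  qed
  also have "\<dots> = (\<Sum>d\<in>{d. d dvd N}. totient d * (N div d))"
    using N by (intro sum.reindex_bij_witness[of _ "(div) N" "(div) N"]) (auto elim!: dvdE)
  finally show ?thesis .
qed

definition ap :: "nat \<Rightarrow> real" where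
  "ap N = (\<Sum>m=1..<N. real (gcd m (N - m)))"

lemma ap_eq: "ap N = bt N - real N"
proof (cases "N = 0")
  case True then show ?thesis by (simp add: ap_def)
next
  case False
  then have N: "N \<ge> 1" by simp
  have "ap N = (\<Sum>m\<in>{1..<N}. real (gcd m N))"
    unfolding ap_def
  proof (intro sum.cong refl)
    fix m assume m: "m \<in> {1..<N}"
    have "gcd m (m + (N - m)) = gcd m (N - m)" by (rule gcd_add2)
    moreover have "m + (N - m) = N" using m by simp
    ultimately show "real (gcd m (N - m)) = real (gcd m N)" by simp
  qed
  moreover have "(\<Sum>m\<in>{1..N}. real (gcd m N)) = (\<Sum>m\<in>{1..<N}. real (gcd m N)) + real N"
    using N by (simp add: atLeastLessThanSuc_atLeastAtMost[symmetric] del: atLeastLessThanSuc_atLeastAtMost)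
  moreover have "(\<Sum>m\<in>{1..N}. real (gcd m N)) = bt N"
  proof -
    have "(\<Sum>m\<in>{1..N}. real (gcd m N)) = real (\<Sum>m\<in>{1..N}. gcd m N)" by simp
    also have "\<dots> = real (\<Sum>d\<in>{d. d dvd N}. totient d * (N div d))" using N by (subst pillai_nat) auto
    also have "\<dots> = bt N" using N by (simp add: bt_alt)
    finally show ?thesis .
  qed
  ultimately show ?thesis by simp
qed

lemma ap_nonneg: "ap N \<ge> 0" unfolding ap_def by (intro sum_nonneg) auto

lemma n_sums: "0 \<le> (r::real) \<Longrightarrow> r < 1 \<Longrightarrow> (\<lambda>n. real n * r^n) sums (r / (1-r)^2)"
proof -
  assume r: "0 \<le> r" "r < 1"
  have "(\<lambda>n. real (Suc n) * r ^ n) sums (1 / (1 - r)^2)"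
    using geometric_deriv_sums[of r] r by simp
  then have "(\<lambda>n. r * (real (Suc n) * r ^ n)) sums (r * (1 / (1 - r)^2))"
    by (rule sums_mult)
  then have "(\<lambda>n. real (Suc n) * r ^ Suc n) sums (r / (1 - r)^2)"
    by (simp add: mult_ac)
  then show ?thesis by (subst (asm) sums_Suc_iff) simp
qed

lemma ap_G:
  fixes s :: real
  assumes s: "0 < s" "s < 1"
  shows "s^2 * (\<Sum>n. ap n * (1-s)^n) = s^2 * (\<Sum>n. bt n * (1-s)^n) - (1-s)"
    and "summable (\<lambda>n. ap n * (1-s)^n)"
proof -
  have S1: "summable (\<lambda>n. bt n * (1-s)^n)" using s by (intro bt_summable) auto
  have S2: "(\<lambda>n. real n * (1-s)^n) sums ((1-s) / s^2)" using n_sums[of "1-s"] s by simp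
  have eq: "(\<lambda>n. ap n * (1-s)^n) = (\<lambda>n. bt n * (1-s)^n - real n * (1-s)^n)"
    by (simp add: ap_eq algebra_simps)
  show "summable (\<lambda>n. ap n * (1-s)^n)" unfolding eq using S1 S2 by (intro summable_diff) (auto simp: sums_iff)
  have "(\<Sum>n. ap n * (1-s)^n) = (\<Sum>n. bt n * (1-s)^n) - (1-s) / s^2"
    unfolding eq using S1 S2 by (subst suminf_diff[symmetric]) (auto simp: sums_iff)
  then have "s^2 * (\<Sum>n. ap n * (1-s)^n) = s^2 * (\<Sum>n. bt n * (1-s)^n) - s^2 * ((1-s) / s^2)"
    by (simp only: right_diff_distrib)
  moreover have "s^2 * ((1-s) / s^2) = 1 - s" using s by simp
  ultimately show "s^2 * (\<Sum>n. ap n * (1-s)^n) = s^2 * (\<Sum>n. bt n * (1-s)^n) - (1-s)"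
    by simp
qed

lemma totient_series_eq: "totient_series = fps_to_fls (Abs_fps (\<lambda>n. complex_of_real (bt n)))"
proof -
  have "(\<lambda>n. complex_of_real (bt n)) = (\<lambda>n. if n = 0 then 0 else
      (\<Sum>d\<in>{d. d dvd n}. of_nat (totient d) / of_nat d) * of_nat n)"
  proof
    fix n show "complex_of_real (bt n) = (if n = 0 then 0 else
      (\<Sum>d\<in>{d. d dvd n}. of_nat (totient d) / of_nat d) * of_nat n)"
      by (cases "n = 0") (simp_all add: bt_def)
  qed
  then show ?thesis unfolding totient_series_def by simp
qed

lemma Phi_diag_eq: "Phi_diag = fps_to_fls (Abs_fps (\<lambda>n. complex_of_real (ap n)))"
  unfolding Phi_diag_def ap_def by (simp add: of_real_sum)

theorem theorem6p4:
  shows "transcendental_over_rat_funs Phi_diag \<and> transcendental_over_rat_funs totient_series"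
proof
  have ev2: "\<forall>\<^sub>F s in at_right (0::real). 0 < s \<and> s < 1"
    unfolding eventually_at_right_field by (intro exI[of _ 1]) auto
  have btG: "\<forall>\<^sub>F s in at_right 0. 0 \<le> s^2 * (\<Sum>n. bt n * (1-s)^n) \<and> s^2 * (\<Sum>n. bt n * (1-s)^n) \<le> 2 * ln (1/s) + 11"
    using ev2
  proof eventually_elim
    case (elim s)
    have "0 \<le> (\<Sum>n. bt n * (1-s)^n)" using elim
      by (intro suminf_nonneg bt_summable mult_nonneg_nonneg bt_nonneg) auto
    then show ?case using elim bt_G_upper[of s] by simp
  qed
  show "transcendental_over_rat_funs totient_series"
    unfolding totient_series_eq
  proof (rule transc_from_bounds)
    show "\<And>n. 0 \<le> bt n" by (rule bt_nonneg)
    show "\<And>r. 0 < r \<Longrightarrow> r < 1 \<Longrightarrow> summable (\<lambda>n. bt n * r ^ n)" by (rule bt_summable)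
    show "filterlim (\<lambda>s. s\<^sup>2 * (\<Sum>n. bt n * (1 - s) ^ n)) at_top (at_right 0)" by (rule bt_lim1)
    show "\<And>m. ((\<lambda>s. s * (s\<^sup>2 * (\<Sum>n. bt n * (1 - s) ^ n)) ^ m) \<longlongrightarrow> 0) (at_right 0)"
      by (rule lim2_helper[OF btG])
  qed
  show "transcendental_over_rat_funs Phi_diag"
    unfolding Phi_diag_eq
  proof (rule transc_from_bounds)
    show "\<And>n. 0 \<le> ap n" by (rule ap_nonneg)
    show "summable (\<lambda>n. ap n * r ^ n)" if "0 < r" "r < 1" for r
      using ap_G(2)[of "1-r"] that by simp
    have t: "((\<lambda>s::real. s - 1) \<longlongrightarrow> 0 - 1) (at_right 0)" by (intro tendsto_intros)
    have lim0: "filterlim (\<lambda>s. (s - 1) + s\<^sup>2 * (\<Sum>n. bt n * (1 - s) ^ n)) at_top (at_right 0)"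
      by (rule filterlim_tendsto_add_at_top[OF t bt_lim1])
    have evq: "\<forall>\<^sub>F s in at_right 0. (s - 1) + s\<^sup>2 * (\<Sum>n. bt n * (1 - s) ^ n) = s\<^sup>2 * (\<Sum>n. ap n * (1 - s) ^ n)"
      using ev2 by eventually_elim (simp add: ap_G(1))
    show "filterlim (\<lambda>s. s\<^sup>2 * (\<Sum>n. ap n * (1 - s) ^ n)) at_top (at_right 0)"
      using iffD1[OF filterlim_cong[OF refl refl evq] lim0] .
    have apG: "\<forall>\<^sub>F s in at_right 0. 0 \<le> s^2 * (\<Sum>n. ap n * (1-s)^n) \<and> s^2 * (\<Sum>n. ap n * (1-s)^n) \<le> 2 * ln (1/s) + 11"
      using ev2 btG
    proof eventually_elim
      case (elim s)
      have "0 \<le> (\<Sum>n. ap n * (1-s)^n)" using elim ap_G(2)[of s]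
        by (intro suminf_nonneg mult_nonneg_nonneg ap_nonneg) auto
      then have h0: "0 \<le> s^2 * (\<Sum>n. ap n * (1-s)^n)" by simp
      have hs: "0 < s" "s < 1" using elim by auto
      have h1: "s^2 * (\<Sum>n. ap n * (1-s)^n) = s^2 * (\<Sum>n. bt n * (1-s)^n) - (1-s)"
        using ap_G(1)[OF hs] .
      have h2: "s^2 * (\<Sum>n. bt n * (1-s)^n) \<le> 2 * ln (1/s) + 11" using elim by blast
      show ?case
      proof (intro conjI)
        show "0 \<le> s^2 * (\<Sum>n. ap n * (1-s)^n)" by (rule h0)
        show "s^2 * (\<Sum>n. ap n * (1-s)^n) \<le> 2 * ln (1/s) + 11" using h1 h2 hs by linarith
      qed
    qed
    show "\<And>m. ((\<lambda>s. s * (s\<^sup>2 * (\<Sum>n. ap n * (1 - s) ^ n)) ^ m) \<longlongrightarrow> 0) (at_right 0)"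
      by (rule lim2_helper[OF apG])
  qed
qed

end
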